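(* Let $n_1,n_2\ge2$ and let $x\neq y$ be real numbers such that the pair $(\sqrt x,\sqrt y)$ of (possibly complex) square roots is $(n_1,n_2)$-independent. Let $K=K(n_1,n_2,x,y)$. Then: (i) $K$ has exactly $n_1n_2$ eigenvalues, all simple, namely $\lambda_{uv}=(n_1-1-2u)\sqrt x+(n_2-1-2v)\sqrt y$, $u\in\{0,\dots,n_1-1\}$, $v\in\{0,\dots,n_2-1\}$; (ii) the rank of $K$ is $n_1n_2$ if $n_1n_2$ is even and $n_1n_2-1$ if $n_1n_2$ is odd; in particular $K$ is nonsingular iff $n_1n_2$ is even; (iii) writing $e_1=(1,0,\dots,0)^\top\in\mathbb{C}^{n_1n_2}$ as a linear combination of a basis of (column) eigenvectors of $K$ (i.e. $Kw=\lambda w$), all coefficients are nonzero.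
   Context: Modified Kac matrix: for $m\ge1$ and $y\in\mathbb{R}$, $\mathcal K(m,y)=(k_{ij})_{1\le i,j\le m}$ with $k_{i,i-1}=(m-i+1)y$, $k_{i,i+1}=i$, and all other entries $0$. Modified Kac matrix of second type: $K(n_1,n_2,x,y)$ is the $n_1n_2\times n_1n_2$ matrix formed by $n_2\times n_2$ blocks $K_{ij}$, $1\le i,j\le n_1$, with $K_{ii}=\mathcal K(n_2,y)$, $K_{i,i-1}=(n_1-i+1)x\,\mathcal I_{n_2}$, $K_{i,i+1}=i\,\mathcal I_{n_2}$, and all other blocks zero; equivalently $K=\mathcal I_{n_1}\otimes\mathcal K(n_2,y)+\mathcal K(n_1,x)\otimes\mathcal I_{n_2}$. With $\mathcal N_i=\{n_i-1-2r: r=0,\dots,n_i-1\}$, a pair $(z_1,z_2)\in\mathbb{C}^2$ is $(n_1,n_2)$-independent if for all $a_i,b_i\in\mathcal N_i$, $(a_1-b_1)z_1+(a_2-b_2)z_2=0$ implies $a_1=b_1$ and $a_2=b_2$. *)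

theory Defs
  imports Complex_Main "Jordan_Normal_Form.Jordan_Normal_Form" "Jordan_Normal_Form.DL_Rank"
begin

definition kac_mat :: "nat \<Rightarrow> complex \<Rightarrow> complex mat" where
  "kac_mat m y = mat m m (\<lambda>(i, j).
     if j + 1 = i then of_nat (m - i) * y
     else if j = i + 1 then of_nat (i + 1)
     else 0)"

text \<open>Modified Kac matrix of the second type: I_{n1} (x) Kac(n2,y) + Kac(n1,x) (x) I_{n2},
  with index p = i*n2 + k (block i, position k inside the block).\<close>
definition kac2_mat :: "nat \<Rightarrow> nat \<Rightarrow> complex \<Rightarrow> complex \<Rightarrow> complex mat" where
  "kac2_mat n1 n2 x y = mat (n1 * n2) (n1 * n2) (\<lambda>(p, q).
     (if p div n2 = q div n2 then kac_mat n2 y $$ (p mod n2, q mod n2) else 0)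
   + (if p mod n2 = q mod n2 then kac_mat n1 x $$ (p div n2, q div n2) else 0))"

definition Nset :: "nat \<Rightarrow> int set" where
  "Nset n = {int n - 1 - 2 * int r | r. r < n}"

definition independent_pair :: "nat \<Rightarrow> nat \<Rightarrow> complex \<Rightarrow> complex \<Rightarrow> bool" where
  "independent_pair n1 n2 z1 z2 \<longleftrightarrow>
    (\<forall>a1\<in>Nset n1. \<forall>b1\<in>Nset n1. \<forall>a2\<in>Nset n2. \<forall>b2\<in>Nset n2.
       of_int (a1 - b1) * z1 + of_int (a2 - b2) * z2 = 0 \<longrightarrow> a1 = b1 \<and> a2 = b2)"

end

theory Submission
  imports Defs
begin


lemma ring_aux1: "(A::'a::comm_ring) * (B*g + C*h) = A*B*g + C*(A*h)" by (simp add: algebra_simps)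
lemma ring_aux2: "(A::'a::comm_ring) * B * g + C * (D * g) = (A * B + C * D) * g" by (simp add: algebra_simps)
lemma ring_aux3: "(X::'a::comm_ring) = (E + C * D) * g \<Longrightarrow> E + C * D = F * C \<Longrightarrow> X = F * (C * g)" by (simp add: algebra_simps)

definition pode :: "complex \<Rightarrow> complex poly \<Rightarrow> complex \<Rightarrow> complex \<Rightarrow> bool" where
  "pode y g c d \<longleftrightarrow> [:1,0,-y:] * pderiv g = [:c, d:] * g"

lemma pode_one: "pode y 1 0 0" by (simp add: pode_def)

lemma pode_p: assumes "pode y g c d" "y = s^2"
  shows "pode y ([:1,s:] * g) (c + s) (d - y)"
proof -
  have d: "pderiv ([:1,s:] * g) = [:s:] * g + [:1,s:] * pderiv g"
    by (subst pderiv_mult) (simp add: pderiv_pCons)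
  have "[:1,0,-y:] * pderiv ([:1,s:] * g) = [:1,0,-y:]*[:s:]*g + [:1,s:]*([:1,0,-y:]*pderiv g)"
    unfolding d by (rule ring_aux1)
  also have "\<dots> = ([:1,0,-y:]*[:s:] + [:1,s:]*[:c,d:]) * g" using assms(1) unfolding pode_def by (simp only: ring_aux2)
  also have "[:1,0,-y:]*[:s:] + [:1,s:]*[:c,d:] = [:c+s, d-y:] * [:1,s:]"
    using assms(2) by (simp add: algebra_simps power2_eq_square)
  finally show ?thesis unfolding pode_def by (simp only: mult.assoc)
qed

lemma pode_q: assumes "pode y g c d" "y = s^2"
  shows "pode y ([:1,-s:] * g) (c - s) (d - y)"
  using pode_p[OF assms(1), of "-s"] assms(2) by simp

lemma pode_pow: assumes "y = s^2"
  shows "pode y ([:1,s:]^a * [:1,-s:]^b) ((of_nat a - of_nat b) * s) (- of_nat (a+b) * y)"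
proof -
  have A: "pode y ([:1,s:]^a) (of_nat a * s) (- of_nat a * y)" for a
  proof (induction a)
    case 0 then show ?case using pode_one by simp
  next
    case (Suc a)
    have "pode y ([:1,s:] * [:1,s:]^a) (of_nat a * s + s) (- of_nat a * y - y)" by (rule pode_p[OF Suc assms])
    moreover have "of_nat a * s + s = of_nat (Suc a) * s" "- of_nat a * y - y = - of_nat (Suc a) * y"
      by (simp_all add: algebra_simps)
    ultimately show ?case by (simp only: power_Suc)
  qed
  show ?thesis
  proof (induction b)
    case 0 then show ?case using A by simp
  next
    case (Suc b)
    have "pode y ([:1,-s:] * ([:1,s:]^a * [:1,-s:]^b)) ((of_nat a - of_nat b) * s - s) (- of_nat (a+b) * y - y)"
      by (rule pode_q[OF Suc assms])
    moreover have "(of_nat a - of_nat b) * s - s = (of_nat a - of_nat (Suc b)) * s"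
       "- of_nat (a+b) * y - y = - of_nat (a + Suc b) * y"
      by (simp_all add: algebra_simps)
    ultimately show ?case by (simp only: power_Suc mult.left_commute[of "[:1,-s:]"])
  qed
qed

lemma pode_coeff: assumes "pode y f c d"
  shows "of_nat (Suc i) * coeff f (Suc i) - (if i \<ge> 2 then y * of_nat (i - 1) * coeff f (i - 1) else 0)
     = c * coeff f i + (if i \<ge> 1 then d * coeff f (i - 1) else 0)"
proof -
  have e: "[:1,0,-y:] * h = h + pCons 0 (pCons 0 (Polynomial.smult (-y) h))" for h :: "complex poly"
    by (simp add: algebra_simps)
  have e2: "[:c,d:] * f = Polynomial.smult c f + pCons 0 (Polynomial.smult d f)" by simp
  have "coeff ([:1,0,-y:] * pderiv f) i = coeff ([:c,d:] * f) i" using assms by (simp add: pode_def)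
  then show ?thesis unfolding e e2
    by (cases i; cases "i - 1"; simp add: coeff_pderiv algebra_simps)
qed



definition kf :: "nat \<Rightarrow> complex \<Rightarrow> nat \<Rightarrow> nat \<Rightarrow> complex" where
  "kf m y i j = (if j + 1 = i then of_nat (m - i) * y else if j = i + 1 then of_nat (i + 1) else 0)"

definition kw :: "nat \<Rightarrow> complex \<Rightarrow> nat \<Rightarrow> nat \<Rightarrow> complex" where
  "kw m s u i = coeff ([:1,s:]^(m-1-u) * [:1,-s:]^u) i"

definition kl :: "nat \<Rightarrow> complex \<Rightarrow> nat \<Rightarrow> nat \<Rightarrow> complex" where
  "kl m s u i = kw m s u i / (of_nat (m-1 choose i) * (s^2)^i)"

definition ev :: "nat \<Rightarrow> complex \<Rightarrow> nat \<Rightarrow> complex" where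
  "ev m s u = of_int (int m - 1 - 2 * int u) * s"

lemma kf_row: assumes "i < m"
  shows "(\<Sum>j<m. kf m y i j * f j) = (if i \<ge> 1 then of_nat (m-i) * y * f (i-1) else 0)
     + (if i + 1 < m then of_nat (i+1) * f (i+1) else 0)"
proof -
  have "(\<Sum>j<m. kf m y i j * f j) = (\<Sum>j<m. (if i \<ge> 1 \<and> j = i - 1 then of_nat (m-i) * y * f j else 0)
     + (if j = i + 1 then of_nat (i+1) * f j else 0))"
    by (rule sum.cong) (auto simp: kf_def)
  also have "\<dots> = (\<Sum>j<m. (if i \<ge> 1 \<and> j = i - 1 then of_nat (m-i) * y * f j else 0))
     + (\<Sum>j<m. (if j = i + 1 then of_nat (i+1) * f j else 0))"
    by (rule sum.distrib)
  also have "(\<Sum>j<m. (if i \<ge> 1 \<and> j = i - 1 then of_nat (m-i) * y * f j else 0)) =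
     (if i \<ge> 1 then of_nat (m-i) * y * f (i-1) else 0)"
    using assms by (cases "i \<ge> 1") (auto simp: sum.delta)
  also have "(\<Sum>j<m. (if j = i + 1 then of_nat (i+1) * f j else 0)) = (if i + 1 < m then of_nat (i+1) * f (i+1) else 0)"
    by (simp add: sum.delta)
  finally show ?thesis .
qed

lemma kf_col: assumes "j < m"
  shows "(\<Sum>i<m. f i * kf m y i j) = (if j + 1 < m then f (j+1) * (of_nat (m-(j+1)) * y) else 0)
     + (if j \<ge> 1 then f (j-1) * of_nat j else 0)"
proof -
  have "(\<Sum>i<m. f i * kf m y i j) = (\<Sum>i<m. (if i = j + 1 then f i * (of_nat (m-(j+1)) * y) else 0)
     + (if j \<ge> 1 \<and> i = j - 1 then f i * of_nat j else 0))"
    by (rule sum.cong) (auto simp: kf_def)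
  also have "\<dots> = (\<Sum>i<m. (if i = j + 1 then f i * (of_nat (m-(j+1)) * y) else 0))
     + (\<Sum>i<m. (if j \<ge> 1 \<and> i = j - 1 then f i * of_nat j else 0))"
    by (rule sum.distrib)
  also have "(\<Sum>i<m. (if j \<ge> 1 \<and> i = j - 1 then f i * of_nat j else 0)) =
     (if j \<ge> 1 then f (j-1) * of_nat j else 0)"
    using assms by (cases "j \<ge> 1") (auto simp: sum.delta)
  also have "(\<Sum>i<m. (if i = j + 1 then f i * (of_nat (m-(j+1)) * y) else 0)) = (if j + 1 < m then f (j+1) * (of_nat (m-(j+1)) * y) else 0)"
    by (simp add: sum.delta)
  finally show ?thesis .
qed

lemma kw_0: "kw m s u 0 = 1"
  by (simp add: kw_def coeff_mult_0 coeff_0_power)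

lemma kw_high: assumes "u < m" "m \<le> j" shows "kw m s u j = 0"
proof -
  have "degree ([:1,s:]^(m-1-u) * [:1,-s:]^u) \<le> degree ([:1,s:]^(m-1-u)) + degree ([:1,-s:]^u)"
    by (rule degree_mult_le)
  also have "\<dots> \<le> degree [:1,s:] * (m-1-u) + degree [:1,-s:] * u"
    by (intro add_mono degree_power_le)
  also have "\<dots> \<le> (m-1-u) + u" by (intro add_mono) auto
  finally show ?thesis using assms unfolding kw_def by (intro coeff_eq_0) auto
qed

lemma kw_rec: assumes "u < m" "y = s^2" "i < m"
  shows "of_nat (i+1) * kw m s u (i+1) + (if i \<ge> 1 then of_nat (m-i) * y * kw m s u (i-1) else 0)
     = ev m s u * kw m s u i"
proof -
  define a where "a = m - 1 - u"
  have P: "pode y ([:1,s:]^a * [:1,-s:]^u) ((of_nat a - of_nat u) * s) (- of_nat (a+u) * y)"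
    by (rule pode_pow[OF assms(2)])
  note C = pode_coeff[OF P, of i]
  have au: "a + u = m - 1" using assms unfolding a_def by auto
  have evv: "(of_nat a - of_nat u) * s = ev m s u" unfolding ev_def a_def using assms(1)
    by (simp add: of_nat_diff)
  have kw: "kw m s u = coeff ([:1,s:]^a * [:1,-s:]^u)" unfolding kw_def a_def by auto
  show ?thesis
  proof (cases "i \<ge> 2")
    case True
    have mi: "of_nat (m - i) = (of_nat (m - Suc 0) + 1 - of_nat i :: complex)" using True assms(3)
      by (simp add: of_nat_diff)
    have i1: "of_nat (i - 1) = (of_nat i - 1 :: complex)" using True by (simp add: of_nat_diff)
    show ?thesis using C True unfolding kw evv au mi i1 by (simp add: algebra_simps)
  next
    case False
    then have "i = 0 \<or> i = 1" by auto
    then show ?thesis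
    proof
      assume "i = 0" then show ?thesis using C unfolding kw evv au by (simp add: algebra_simps)
    next
      assume i: "i = 1"
      have "of_nat (m - 1) = (of_nat (m-1) :: complex)" by simp
      then show ?thesis using C i unfolding kw evv au by (simp add: algebra_simps)
    qed
  qed
qed

lemma kw_right: assumes "u < m" "y = s^2" "i < m"
  shows "(\<Sum>j<m. kf m y i j * kw m s u j) = ev m s u * kw m s u i"
proof -
  have "(if i + 1 < m then of_nat (i+1) * kw m s u (i+1) else 0) = of_nat (i+1) * kw m s u (i+1)"
    using kw_high[OF assms(1), of "i+1"] by auto
  then show ?thesis unfolding kf_row[OF assms(3)] using kw_rec[OF assms] by (simp add: algebra_simps)
qed

lemma binom_aux: assumes "k < n" shows "(n - k) * (n choose k) = (k+1) * (n choose (k+1))"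
  using binomial_absorb_comp[of n k] binomial_absorption[of k n] by simp

lemma kl_0: "kl m s u 0 = 1" by (simp add: kl_def kw_0)

lemma frac_aux1: "(C'::complex) \<noteq> 0 \<Longrightarrow> C \<noteq> 0 \<Longrightarrow> Y \<noteq> 0 \<Longrightarrow> y \<noteq> 0 \<Longrightarrow> M * C = J * C'
   \<Longrightarrow> w / (C' * (Y * y)) * (M * y) = J * w / (C * Y)"
  by (simp add: field_simps)

lemma frac_aux2: "(C'::complex) \<noteq> 0 \<Longrightarrow> C \<noteq> 0 \<Longrightarrow> Y \<noteq> 0 \<Longrightarrow> y \<noteq> 0 \<Longrightarrow> M * C' = J * C
   \<Longrightarrow> w / (C' * Y) * J = M * y * w / (C * (y * Y))"
  by (simp add: field_simps)

lemma kw_left: assumes "u < m" "s \<noteq> 0" "j < m"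
  shows "(\<Sum>i<m. kl m s u i * kf m (s^2) i j) = ev m s u * kl m s u j"
proof -
  define y where "y = s^2"
  have y0: "y \<noteq> 0" using assms(2) unfolding y_def by simp
  let ?C = "\<lambda>i. (of_nat (m-1 choose i) :: complex)"
  have Cnz: "i \<le> m - 1 \<Longrightarrow> ?C i \<noteq> 0" for i by simp
  have R: "of_nat (j+1) * kw m s u (j+1) + (if j \<ge> 1 then of_nat (m-j) * y * kw m s u (j-1) else 0)
     = ev m s u * kw m s u j" using kw_rec[OF assms(1) y_def assms(3)] .
  have T1: "(if j + 1 < m then kl m s u (j+1) * (of_nat (m-(j+1)) * y) else 0) = of_nat (j+1) * kw m s u (j+1) / (?C j * y^j)"
  proof (cases "j + 1 < m")
    case True
    have b: "of_nat (m-1-j) * ?C j = of_nat (j+1) * ?C (j+1)"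
      using binom_aux[of j "m-1"] True by (metis of_nat_mult less_diff_conv)
    have e: "m - (j+1) = m - 1 - j" by simp
    have "kl m s u (j+1) * (of_nat (m-(j+1)) * y) = kw m s u (j+1) / (?C (j+1) * (y^j * y)) * (of_nat (m-1-j) * y)"
      unfolding kl_def y_def[symmetric] e by simp
    also have "\<dots> = of_nat (j+1) * kw m s u (j+1) / (?C j * y^j)"
      by (rule frac_aux1) (use True Cnz[of j] Cnz[of "j+1"] y0 b in auto)
    finally show ?thesis using True by simp
  next
    case False
    then show ?thesis using kw_high[OF assms(1), of "j+1"] by simp
  qed
  have T2: "(if j \<ge> 1 then kl m s u (j-1) * of_nat j else 0) = (if j \<ge> 1 then of_nat (m-j) * y * kw m s u (j-1) else 0) / (?C j * y^j)"
  proof (cases "j \<ge> 1")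
    case True
    have b0: "(m-1-(j-1)) * (m - 1 choose (j-1)) = (j-1+1) * (m-1 choose (j-1+1))"
      by (rule binom_aux) (use True assms(3) in auto)
    have e: "m - 1 - (j - 1) = m - j" "j - 1 + 1 = j" using True assms by auto
    have b: "of_nat (m-j) * ?C (j-1) = of_nat j * ?C j" using b0 unfolding e by (metis of_nat_mult)
    have yj: "y^j = y * y^(j-1)" using True by (metis power_eq_if not_one_le_zero)
    have "kl m s u (j-1) * of_nat j = kw m s u (j-1) / (?C (j-1) * y^(j-1)) * of_nat j"
      unfolding kl_def y_def[symmetric] by simp
    also have "\<dots> = of_nat (m-j) * y * kw m s u (j-1) / (?C j * (y * y^(j-1)))"
      by (rule frac_aux2) (use True Cnz[of j] Cnz[of "j-1"] y0 b assms(3) in auto)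
    finally show ?thesis using True yj by simp
  next
    case False then show ?thesis by simp
  qed
  have "(\<Sum>i<m. kl m s u i * kf m (s^2) i j) = of_nat (j+1) * kw m s u (j+1) / (?C j * y^j) + 
     (if j \<ge> 1 then of_nat (m-j) * y * kw m s u (j-1) else 0) / (?C j * y^j)"
    unfolding kf_col[OF assms(3)] y_def[symmetric] T1 T2 ..
  also have "\<dots> = ev m s u * kw m s u j / (?C j * y^j)" unfolding R[symmetric] by (simp add: add_divide_distrib)
  finally show ?thesis unfolding kl_def y_def by simp
qed



lemma sum_lessThan_add: "(\<Sum>q<(a::nat)+b. F q) = (\<Sum>q<a. F q) + (\<Sum>k<b. F (a+k))"
  by (induction b) (simp_all add: add.assoc)

lemma sum_split: "(\<Sum>q<(n1::nat)*n2. F q) = (\<Sum>i<n1. \<Sum>k<n2. F (i*n2+k))"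
proof (induction n1)
  case 0 then show ?case by simp
next
  case (Suc n1)
  have "(\<Sum>q<Suc n1*n2. F q) = (\<Sum>q<n1*n2 + n2. F q)" by (simp add: add.commute)
  also have "\<dots> = (\<Sum>q<n1*n2. F q) + (\<Sum>k<n2. F (n1*n2+k))" by (rule sum_lessThan_add)
  finally show ?case using Suc by simp
qed

lemma orth: fixes Phi w :: "nat \<Rightarrow> complex" and A :: "nat \<Rightarrow> nat \<Rightarrow> complex"
  assumes "\<forall>q<N. (\<Sum>p<N. Phi p * A p q) = l * Phi q"
  and "\<forall>p<N. (\<Sum>q<N. A p q * w q) = mu * w p"
shows "(l - mu) * (\<Sum>p<N. Phi p * w p) = 0"
proof -
  have "(\<Sum>p<N. Phi p * (\<Sum>q<N. A p q * w q)) = (\<Sum>p<N. Phi p * (mu * w p))"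
    by (rule sum.cong) (use assms(2) in auto)
  also have "\<dots> = mu * (\<Sum>p<N. Phi p * w p)" by (simp add: sum_distrib_left algebra_simps)
  finally have m1: "(\<Sum>p<N. Phi p * (\<Sum>q<N. A p q * w q)) = mu * (\<Sum>p<N. Phi p * w p)" .
  have "(\<Sum>p<N. Phi p * (\<Sum>q<N. A p q * w q)) = (\<Sum>q<N. (\<Sum>p<N. Phi p * A p q) * w q)"
    unfolding sum_distrib_left sum_distrib_right mult.assoc by (rule sum.swap)
  also have "\<dots> = (\<Sum>q<N. (l * Phi q) * w q)"
    by (rule sum.cong) (use assms(1) in auto)
  also have "\<dots> = l * (\<Sum>p<N. Phi p * w p)"
    by (simp add: sum_distrib_left algebra_simps)
  finally have m2: "(\<Sum>p<N. Phi p * (\<Sum>q<N. A p q * w q)) = l * (\<Sum>p<N. Phi p * w p)" .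
  show ?thesis using m1 m2 by (simp add: left_diff_distrib)
qed

lemma eig_indep:
  fixes A :: "nat \<Rightarrow> nat \<Rightarrow> complex" and V :: "nat \<Rightarrow> nat \<Rightarrow> complex"
  assumes eig: "\<forall>r\<in>S. \<forall>i<n. (\<Sum>j<n. A i j * V r j) = l r * V r i"
    and nz: "\<forall>r\<in>S. \<exists>i<n. V r i \<noteq> 0" and inj: "inj_on l S" and fin: "finite S"
    and z: "\<forall>i<n. (\<Sum>r\<in>S. a r * V r i) = 0"
  shows "\<forall>r\<in>S. a r = 0"
  using fin eig nz inj z
proof (induction S arbitrary: a rule: finite_induct)
  case empty then show ?case by simp
next
  case (insert t S)
  have z': "(\<Sum>r\<in>S. a r * V r i) + a t * V t i = 0" if "i < n" for i
    using insert.prems(4) insert.hyps that by (simp add: add.commute)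
  have "(\<Sum>r\<in>S. (a r * (l r - l t)) * V r i) = 0" if i: "i < n" for i
  proof -
    have "(\<Sum>j<n. A i j * ((\<Sum>r\<in>S. a r * V r j) + a t * V t j)) = 0" using z' by simp
    moreover have "(\<Sum>j<n. A i j * ((\<Sum>r\<in>S. a r * V r j) + a t * V t j)) =
        (\<Sum>r\<in>S. a r * (\<Sum>j<n. A i j * V r j)) + a t * (\<Sum>j<n. A i j * V t j)"
    proof -
      have "(\<Sum>j<n. A i j * ((\<Sum>r\<in>S. a r * V r j) + a t * V t j)) =
          (\<Sum>j<n. \<Sum>r\<in>S. a r * (A i j * V r j)) + a t * (\<Sum>j<n. A i j * V t j)"
        by (simp add: distrib_left sum.distrib sum_distrib_left mult.left_commute)
      also have "(\<Sum>j<n. \<Sum>r\<in>S. a r * (A i j * V r j)) = (\<Sum>r\<in>S. \<Sum>j<n. a r * (A i j * V r j))"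
        by (rule sum.swap)
      finally show ?thesis by (simp add: sum_distrib_left)
    qed
    moreover have "\<dots> = (\<Sum>r\<in>S. a r * (l r * V r i)) + a t * (l t * V t i)"
      using insert.prems(1) i by simp
    ultimately have e1: "(\<Sum>r\<in>S. a r * (l r * V r i)) + a t * (l t * V t i) = 0" by simp
    have e2: "l t * ((\<Sum>r\<in>S. a r * V r i) + a t * V t i) = 0" using z' i by simp
    have "(\<Sum>r\<in>S. (a r * (l r - l t)) * V r i) = 
       ((\<Sum>r\<in>S. a r * (l r * V r i)) + a t * (l t * V t i)) - l t * ((\<Sum>r\<in>S. a r * V r i) + a t * V t i)"
      by (simp add: sum_distrib_left sum_subtractf[symmetric] algebra_simps)
    then show ?thesis using e1 e2 by simp
  qed
  then have "\<forall>r\<in>S. a r * (l r - l t) = 0"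
    using insert.IH[of "\<lambda>r. a r * (l r - l t)"] insert.prems by auto
  moreover have "\<forall>r\<in>S. l r \<noteq> l t" using insert.prems(3) insert.hyps by (auto simp: inj_on_def)
  ultimately have aS: "\<forall>r\<in>S. a r = 0" by auto
  obtain i where i: "i < n" "V t i \<noteq> 0" using insert.prems(2) by auto
  have "a t * V t i = 0" using z'[OF i(1)] aS by simp
  then have "a t = 0" using i by simp
  then show ?case using aS by simp
qed

context
  fixes n1 n2 :: nat and sx sy :: complex
  assumes n1: "n1 \<ge> 1" and n2: "n2 \<ge> 1"
begin

definition Kf :: "nat \<Rightarrow> nat \<Rightarrow> complex" where
  "Kf p q = (if p div n2 = q div n2 then kf n2 (sy^2) (p mod n2) (q mod n2) else 0)
          + (if p mod n2 = q mod n2 then kf n1 (sx^2) (p div n2) (q div n2) else 0)"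

definition VV :: "nat \<Rightarrow> nat \<Rightarrow> complex" where
  "VV r p = kw n1 sx (r div n2) (p div n2) * kw n2 sy (r mod n2) (p mod n2)"

definition PP :: "nat \<Rightarrow> nat \<Rightarrow> complex" where
  "PP r p = kl n1 sx (r div n2) (p div n2) * kl n2 sy (r mod n2) (p mod n2)"

definition LL :: "nat \<Rightarrow> complex" where
  "LL r = ev n1 sx (r div n2) + ev n2 sy (r mod n2)"

lemma divmod_simps: "k < n2 \<Longrightarrow> (i*n2+k) div n2 = i" "k < n2 \<Longrightarrow> (i*n2+k) mod n2 = k"
  using n2 by auto

lemma VV_0: "VV r 0 = 1" by (simp add: VV_def kw_0)
lemma PP_0: "PP r 0 = 1" by (simp add: PP_def kl_0)

lemma r_bounds: "r < n1 * n2 \<Longrightarrow> r div n2 < n1 \<and> r mod n2 < n2"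
  using n2 by (auto simp: less_mult_imp_div_less)

lemma VV_right: assumes r: "r < n1*n2" and p: "p < n1*n2"
  shows "(\<Sum>q<n1*n2. Kf p q * VV r q) = LL r * VV r p"
proof -
  let ?pd = "p div n2" and ?pm = "p mod n2" and ?u = "r div n2" and ?v = "r mod n2"
  have pb: "?pd < n1" "?pm < n2" using r_bounds[OF p] by auto
  have rb: "?u < n1" "?v < n2" using r_bounds[OF r] by auto
  let ?w1 = "kw n1 sx ?u" and ?w2 = "kw n2 sy ?v"
  have "(\<Sum>q<n1*n2. Kf p q * VV r q) = (\<Sum>i<n1. \<Sum>k<n2. Kf p (i*n2+k) * VV r (i*n2+k))"
    by (rule sum_split)
  also have "\<dots> = (\<Sum>i<n1. \<Sum>k<n2. (if i = ?pd then kf n2 (sy^2) ?pm k * (?w1 i * ?w2 k) else 0)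
     + (if k = ?pm then kf n1 (sx^2) ?pd i * (?w1 i * ?w2 k) else 0))"
    by (intro sum.cong refl) (auto simp: Kf_def VV_def divmod_simps algebra_simps)
  also have "\<dots> = (\<Sum>i<n1. \<Sum>k<n2. (if i = ?pd then kf n2 (sy^2) ?pm k * (?w1 i * ?w2 k) else 0))
     + (\<Sum>i<n1. \<Sum>k<n2. (if k = ?pm then kf n1 (sx^2) ?pd i * (?w1 i * ?w2 k) else 0))"
    by (simp add: sum.distrib)
  also have "(\<Sum>i<n1. \<Sum>k<n2. (if i = ?pd then kf n2 (sy^2) ?pm k * (?w1 i * ?w2 k) else 0))
      = ?w1 ?pd * (\<Sum>k<n2. kf n2 (sy^2) ?pm k * ?w2 k)"
  proof -
    have "(\<Sum>i<n1. \<Sum>k<n2. (if i = ?pd then kf n2 (sy^2) ?pm k * (?w1 i * ?w2 k) else 0))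
      = (\<Sum>i<n1. if i = ?pd then (\<Sum>k<n2. kf n2 (sy^2) ?pm k * (?w1 i * ?w2 k)) else 0)"
      by (rule sum.cong) auto
    also have "\<dots> = (\<Sum>k<n2. kf n2 (sy^2) ?pm k * (?w1 ?pd * ?w2 k))" using pb by (simp add: sum.delta)
    finally show ?thesis by (simp add: sum_distrib_left algebra_simps)
  qed
  also have "(\<Sum>i<n1. \<Sum>k<n2. (if k = ?pm then kf n1 (sx^2) ?pd i * (?w1 i * ?w2 k) else 0))
      = ?w2 ?pm * (\<Sum>i<n1. kf n1 (sx^2) ?pd i * ?w1 i)"
    using pb by (simp add: sum.delta sum_distrib_left algebra_simps)
  also have "(\<Sum>k<n2. kf n2 (sy^2) ?pm k * ?w2 k) = ev n2 sy ?v * ?w2 ?pm"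
    by (rule kw_right) (use rb pb in auto)
  also have "(\<Sum>i<n1. kf n1 (sx^2) ?pd i * ?w1 i) = ev n1 sx ?u * ?w1 ?pd"
    by (rule kw_right) (use rb pb in auto)
  finally show ?thesis by (simp add: LL_def VV_def algebra_simps)
qed

lemma PP_left: assumes r: "r < n1*n2" and q: "q < n1*n2" and sx: "sx \<noteq> 0" and sy: "sy \<noteq> 0"
  shows "(\<Sum>p<n1*n2. PP r p * Kf p q) = LL r * PP r q"
proof -
  let ?qd = "q div n2" and ?qm = "q mod n2" and ?u = "r div n2" and ?v = "r mod n2"
  have qb: "?qd < n1" "?qm < n2" using r_bounds[OF q] by auto
  have rb: "?u < n1" "?v < n2" using r_bounds[OF r] by auto
  let ?w1 = "kl n1 sx ?u" and ?w2 = "kl n2 sy ?v"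
  have "(\<Sum>p<n1*n2. PP r p * Kf p q) = (\<Sum>i<n1. \<Sum>k<n2. PP r (i*n2+k) * Kf (i*n2+k) q)"
    by (rule sum_split)
  also have "\<dots> = (\<Sum>i<n1. \<Sum>k<n2. (if i = ?qd then (?w1 i * ?w2 k) * kf n2 (sy^2) k ?qm else 0)
     + (if k = ?qm then (?w1 i * ?w2 k) * kf n1 (sx^2) i ?qd else 0))"
    by (intro sum.cong refl) (auto simp: Kf_def PP_def divmod_simps algebra_simps)
  also have "\<dots> = (\<Sum>i<n1. \<Sum>k<n2. (if i = ?qd then (?w1 i * ?w2 k) * kf n2 (sy^2) k ?qm else 0))
     + (\<Sum>i<n1. \<Sum>k<n2. (if k = ?qm then (?w1 i * ?w2 k) * kf n1 (sx^2) i ?qd else 0))"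
    by (simp add: sum.distrib)
  also have "(\<Sum>i<n1. \<Sum>k<n2. (if i = ?qd then (?w1 i * ?w2 k) * kf n2 (sy^2) k ?qm else 0))
      = ?w1 ?qd * (\<Sum>k<n2. ?w2 k * kf n2 (sy^2) k ?qm)"
  proof -
    have "(\<Sum>i<n1. \<Sum>k<n2. (if i = ?qd then (?w1 i * ?w2 k) * kf n2 (sy^2) k ?qm else 0))
      = (\<Sum>i<n1. if i = ?qd then (\<Sum>k<n2. (?w1 i * ?w2 k) * kf n2 (sy^2) k ?qm) else 0)"
      by (rule sum.cong) auto
    also have "\<dots> = (\<Sum>k<n2. (?w1 ?qd * ?w2 k) * kf n2 (sy^2) k ?qm)" using qb by (simp add: sum.delta)
    finally show ?thesis by (simp add: sum_distrib_left algebra_simps)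
  qed
  also have "(\<Sum>i<n1. \<Sum>k<n2. (if k = ?qm then (?w1 i * ?w2 k) * kf n1 (sx^2) i ?qd else 0))
      = ?w2 ?qm * (\<Sum>i<n1. ?w1 i * kf n1 (sx^2) i ?qd)"
    using qb by (simp add: sum.delta sum_distrib_left algebra_simps)
  also have "(\<Sum>k<n2. ?w2 k * kf n2 (sy^2) k ?qm) = ev n2 sy ?v * ?w2 ?qm"
    by (rule kw_left) (use rb qb sy in auto)
  also have "(\<Sum>i<n1. ?w1 i * kf n1 (sx^2) i ?qd) = ev n1 sx ?u * ?w1 ?qd"
    by (rule kw_left) (use rb qb sx in auto)
  finally show ?thesis by (simp add: LL_def PP_def algebra_simps)
qed

end



lemma mv_entry: assumes "A \<in> carrier_mat N N" "v \<in> carrier_vec N" "p < N"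
  shows "(A *\<^sub>v v) $ p = (\<Sum>q<N. A $$ (p,q) * v $ q)"
  using assms by (auto simp: scalar_prod_def atLeast0LessThan intro: sum.cong)

lemma swap3: fixes Phi w :: "nat \<Rightarrow> complex" and A :: "nat \<Rightarrow> nat \<Rightarrow> complex"
  shows "(\<Sum>p<N. Phi p * (\<Sum>q<M. A p q * w q)) = (\<Sum>q<M. (\<Sum>p<N. Phi p * A p q) * w q)"
  unfolding sum_distrib_left sum_distrib_right mult.assoc by (rule sum.swap)

lemma poly_prod_lin: "poly (\<Prod>a\<leftarrow>as. [:- a, 1:]) (mu::complex) = 0 \<longleftrightarrow> mu \<in> set as"
  by (induction as) auto

lemma order_prod_lin: assumes "distinct as" "(a::complex) \<in> set as"
  shows "Polynomial.order a (\<Prod>b\<leftarrow>as. [:- b, 1:]) = 1"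
  using assms
proof (induction as)
  case Nil then show ?case by simp
next
  case (Cons b as)
  have nz: "(\<Prod>b\<leftarrow>as. [:- b, 1:]) \<noteq> 0"
    by (auto simp: prod_list_zero_iff)
  have prod: "(\<Prod>c\<leftarrow>b#as. [:- c, 1:]) = [:- b, 1:] * (\<Prod>c\<leftarrow>as. [:- c, 1:])" by simp
  have nz2: "[:- b, 1:] * (\<Prod>c\<leftarrow>as. [:- c, 1:]) \<noteq> 0" by (intro no_zero_divisors nz) simp
  show ?case
  proof (cases "a = b")
    case True
    then have "a \<notin> set as" using Cons.prems by auto
    then have "Polynomial.order a (\<Prod>c\<leftarrow>as. [:- c, 1:]) = 0" by (intro Polynomial.order_0I) (simp add: poly_prod_lin)
    moreover have "Polynomial.order a [:- b, 1:] = 1" using True order_power_n_n[of a 1] by simp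
    ultimately show ?thesis unfolding prod order_mult[OF nz2] by simp
  next
    case False
    then have "distinct as" "a \<in> set as" using Cons.prems by auto
    then have "Polynomial.order a (\<Prod>c\<leftarrow>as. [:- c, 1:]) = 1" by (rule Cons.IH)
    moreover have "Polynomial.order a [:- b, 1:] = 0" using False by (intro Polynomial.order_0I) simp
    ultimately show ?thesis unfolding prod order_mult[OF nz2] by simp
  qed
qed



theorem lemma3:
  fixes n1 n2 :: nat and x y :: real and sx sy :: complex
  assumes "n1 \<ge> 2" and "n2 \<ge> 2" and "x \<noteq> y"
    and "sx\<^sup>2 = complex_of_real x" and "sy\<^sup>2 = complex_of_real y"
    and "independent_pair n1 n2 sx sy"
  defines "K \<equiv> kac2_mat n1 n2 (complex_of_real x) (complex_of_real y)"
    and "N \<equiv> n1 * n2"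
    and "lam \<equiv> (\<lambda>u v. (of_int (int n1 - 1 - 2 * int u)) * sx + (of_int (int n2 - 1 - 2 * int v)) * sy)"
  shows "{\<mu>. eigenvalue K \<mu>} = {lam u v | u v. u < n1 \<and> v < n2}
       \<and> card {\<mu>. eigenvalue K \<mu>} = N
       \<and> (\<forall>\<mu>. eigenvalue K \<mu> \<longrightarrow> Polynomial.order \<mu> (char_poly K) = 1)
       \<and> vec_space.rank N K = (if even N then N else N - 1)
       \<and> (invertible_mat K \<longleftrightarrow> even N)
       \<and> (\<forall>ws c. length ws = N \<and> distinct ws \<and> vectorspace.basis class_ring (module_vec TYPE(complex) N) (set ws)
              \<and> (\<forall>w\<in>set ws. \<exists>\<mu>. eigenvector K w \<mu>)
              \<and> mat_of_cols N ws *\<^sub>v vec N c = unit_vec N 0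
            \<longrightarrow> (\<forall>i<N. c i \<noteq> 0))"
proof -
  note ind = assms(6)[unfolded independent_pair_def]
  have n1: "n1 \<ge> 1" and n2: "n2 \<ge> 1" using assms(1,2) by auto
  have Npos: "N > 0" unfolding N_def using n1 n2 by simp
  let ?Kf = "Kf n1 n2 sx sy" and ?V = "VV n1 n2 sx sy" and ?P = "PP n1 n2 sx sy" and ?L = "LL n1 n2 sx sy"
  have Kc: "K \<in> carrier_mat N N" unfolding K_def N_def kac2_mat_def by simp
  have Kent: "K $$ (p,q) = ?Kf p q" if "p < N" "q < N" for p q
  proof -
    have b: "p div n2 < n1" "p mod n2 < n2" "q div n2 < n1" "q mod n2 < n2"
      using r_bounds[OF n1 n2] that unfolding N_def by auto
    show ?thesis using that b unfolding K_def N_def kac2_mat_def Kf_def[OF n1 n2] kac_mat_def kf_def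
      by (simp add: assms(4,5))
  qed
  have Nn1: "int n1 - 1 - 2 * int r \<in> Nset n1" if "r < n1" for r using that unfolding Nset_def by auto
  have Nn2: "int n2 - 1 - 2 * int r \<in> Nset n2" if "r < n2" for r using that unfolding Nset_def by auto
  have sx0: "sx \<noteq> 0"
  proof
    assume "sx = 0"
    then have "of_int ((int n1 - 1 - 2 * int 0) - (int n1 - 1 - 2 * int 1)) * sx + of_int ((int n2 - 1 - 2 * int 0) - (int n2 - 1 - 2 * int 0)) * sy = 0" by simp
    note eq = this
    have h: "int n1 - 1 - 2 * int 0 \<in> Nset n1" "int n1 - 1 - 2 * int 1 \<in> Nset n1" "int n2 - 1 - 2 * int 0 \<in> Nset n2"
      using Nn1[of 0] Nn1[of 1] Nn2[of 0] assms(1,2) by auto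
    show False using ind[rule_format, OF h(1) h(2) h(3) h(3) eq] by simp
  qed
  have sy0: "sy \<noteq> 0"
  proof
    assume "sy = 0"
    then have "of_int ((int n1 - 1 - 2 * int 0) - (int n1 - 1 - 2 * int 0)) * sx + of_int ((int n2 - 1 - 2 * int 0) - (int n2 - 1 - 2 * int 1)) * sy = 0" by simp
    note eq = this
    have h: "int n1 - 1 - 2 * int 0 \<in> Nset n1" "int n2 - 1 - 2 * int 0 \<in> Nset n2" "int n2 - 1 - 2 * int 1 \<in> Nset n2"
      using Nn1[of 0] Nn2[of 1] Nn2[of 0] assms(1,2) by auto
    show False using ind[rule_format, OF h(1) h(1) h(2) h(3) eq] by simp
  qed
  have Lform: "?L r = lam (r div n2) (r mod n2)" for r
    unfolding LL_def[OF n1 n2] lam_def ev_def by simp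
  have lam_inj: "u = u' \<and> v = v'" if "lam u v = lam u' v'" "u < n1" "u' < n1" "v < n2" "v' < n2" for u v u' v'
  proof -
    have "of_int ((int n1 - 1 - 2 * int u) - (int n1 - 1 - 2 * int u')) * sx
        + of_int ((int n2 - 1 - 2 * int v) - (int n2 - 1 - 2 * int v')) * sy = 0"
      using that(1) unfolding lam_def by (simp add: algebra_simps)
    then have "int n1 - 1 - 2 * int u = int n1 - 1 - 2 * int u' \<and> int n2 - 1 - 2 * int v = int n2 - 1 - 2 * int v'"
      using ind[rule_format, OF Nn1[OF that(2)] Nn1[OF that(3)] Nn2[OF that(4)] Nn2[OF that(5)]] by blast
    then show ?thesis by simp
  qed
  have Linj: "inj_on ?L {..<N}"
  proof (rule inj_onI)
    fix r r' assume "r \<in> {..<N}" "r' \<in> {..<N}" "?L r = ?L r'"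
    then have "r div n2 = r' div n2 \<and> r mod n2 = r' mod n2"
      using lam_inj r_bounds[OF n1 n2] unfolding Lform N_def by auto
    then show "r = r'" by (metis div_mult_mod_eq)
  qed
  have Lset: "?L ` {..<N} = {lam u v | u v. u < n1 \<and> v < n2}"
  proof
    show "?L ` {..<N} \<subseteq> {lam u v | u v. u < n1 \<and> v < n2}"
      using r_bounds[OF n1 n2] unfolding Lform N_def by auto
    show "{lam u v | u v. u < n1 \<and> v < n2} \<subseteq> ?L ` {..<N}"
    proof clarify
      fix u v assume uv: "u < n1" "v < n2"
      have "u * n2 + v < (u+1) * n2" using uv by simp
      also have "(u+1) * n2 \<le> n1 * n2" using uv by (intro mult_le_mono1) simp
      finally have "u * n2 + v < N" unfolding N_def .
      moreover have "?L (u * n2 + v) = lam u v" unfolding Lform using uv by simp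
      ultimately show "lam u v \<in> ?L ` {..<N}" by force
    qed
  qed
  have cardS: "card (?L ` {..<N}) = N" using card_image[OF Linj] by simp
  have Veig: "\<forall>p<N. (\<Sum>q<N. ?Kf p q * ?V r q) = ?L r * ?V r p" if "r < N" for r
    using VV_right[OF n1 n2] that unfolding N_def by auto
  have Peig: "\<forall>q<N. (\<Sum>p<N. ?P r p * ?Kf p q) = ?L r * ?P r q" if "r < N" for r
    using PP_left[OF n1 n2 _ _ sx0 sy0] that unfolding N_def by auto
  have ev_L: "eigenvalue K (?L r)" if "r < N" for r
  proof -
    have "eigenvector K (vec N (?V r)) (?L r)"
      unfolding eigenvector_def
    proof (intro conjI)
      show "vec N (?V r) \<in> carrier_vec (dim_row K)" using Kc by simp
      show "vec N (?V r) \<noteq> 0\<^sub>v (dim_row K)"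
      proof
        assume "vec N (?V r) = 0\<^sub>v (dim_row K)"
        then have "vec N (?V r) $ 0 = 0\<^sub>v N $ 0" using Kc by simp
        then show False using Npos VV_0[OF n1 n2] by simp
      qed
      show "K *\<^sub>v vec N (?V r) = ?L r \<cdot>\<^sub>v vec N (?V r)"
      proof (rule eq_vecI)
        fix p assume "p < dim_vec (?L r \<cdot>\<^sub>v vec N (?V r))"
        then have p: "p < N" by simp
        have "(K *\<^sub>v vec N (?V r)) $ p = (\<Sum>q<N. K $$ (p,q) * vec N (?V r) $ q)"
          by (rule mv_entry[OF Kc _ p]) simp
        also have "\<dots> = (\<Sum>q<N. ?Kf p q * ?V r q)" by (rule sum.cong) (auto simp: Kent p)
        also have "\<dots> = ?L r * ?V r p" using Veig[OF that] p by simp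
        finally show "(K *\<^sub>v vec N (?V r)) $ p = (?L r \<cdot>\<^sub>v vec N (?V r)) $ p" using p by simp
      qed (use Kc in simp)
    qed
    then show ?thesis unfolding eigenvalue_def by blast
  qed
  obtain as where as: "char_poly K = (\<Prod>a\<leftarrow>as. [:- a, 1:])" "length as = N"
    using char_poly_factorized[OF Kc] by blast
  have ev_iff: "eigenvalue K mu \<longleftrightarrow> mu \<in> set as" for mu
    unfolding eigenvalue_root_char_poly[OF Kc] as(1) poly_prod_lin ..
  have sub: "?L ` {..<N} \<subseteq> set as" using ev_L ev_iff by auto
  have "card (set as) \<le> N" using card_length[of as] as(2) by simp
  then have setas: "set as = ?L ` {..<N}"
    using card_subset_eq[OF finite_set sub] cardS card_mono[OF finite_set sub] by simp
  have dist: "distinct as" using card_distinct[of as] setas cardS as(2) by simp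
  have EV: "{\<mu>. eigenvalue K \<mu>} = ?L ` {..<N}" using ev_iff setas by auto
  have part1: "{\<mu>. eigenvalue K \<mu>} = {lam u v | u v. u < n1 \<and> v < n2}" using EV Lset by simp
  have part2: "card {\<mu>. eigenvalue K \<mu>} = N" using EV cardS by simp
  have part3: "\<forall>\<mu>. eigenvalue K \<mu> \<longrightarrow> Polynomial.order \<mu> (char_poly K) = 1"
    using ev_iff order_prod_lin[OF dist] as(1) by simp
  have zero_char: "0 \<in> {lam u v | u v. u < n1 \<and> v < n2} \<longleftrightarrow> odd N"
  proof
    assume "0 \<in> {lam u v | u v. u < n1 \<and> v < n2}"
    then obtain u v where uv: "u < n1" "v < n2" "lam u v = 0" by auto
    have u': "n1 - 1 - u < n1" and v': "n2 - 1 - v < n2" using uv by auto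
    have e1: "int n1 - 1 - 2 * int (n1 - 1 - u) = - (int n1 - 1 - 2 * int u)" using uv by (simp add: of_nat_diff)
    have e2: "int n2 - 1 - 2 * int (n2 - 1 - v) = - (int n2 - 1 - 2 * int v)" using uv by (simp add: of_nat_diff)
    have "of_int ((int n1 - 1 - 2 * int u) - (int n1 - 1 - 2 * int (n1 - 1 - u))) * sx
        + of_int ((int n2 - 1 - 2 * int v) - (int n2 - 1 - 2 * int (n2 - 1 - v))) * sy = 2 * lam u v"
      unfolding e1 e2 lam_def by (simp add: algebra_simps)
    also have "\<dots> = 0" using uv by simp
    finally have "int n1 - 1 - 2 * int u = int n1 - 1 - 2 * int (n1 - 1 - u) \<and> int n2 - 1 - 2 * int v = int n2 - 1 - 2 * int (n2 - 1 - v)"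
      using ind[rule_format, OF Nn1[OF uv(1)] Nn1[OF u'] Nn2[OF uv(2)] Nn2[OF v']] by blast
    then have "int n1 = 2 * int u + 1" "int n2 = 2 * int v + 1" unfolding e1 e2 by auto
    then have "n1 = 2 * u + 1" "n2 = 2 * v + 1" by linarith+
    then show "odd N" unfolding N_def by simp
  next
    assume "odd N"
    then have o: "odd n1" "odd n2" unfolding N_def by auto
    define u where "u = n1 div 2"
    define v where "v = n2 div 2"
    have "n1 = 2 * u + 1" "n2 = 2 * v + 1" using o unfolding u_def v_def by presburger+
    then have "u < n1" "v < n2" "lam u v = 0" unfolding lam_def by auto
    then show "0 \<in> {lam u v | u v. u < n1 \<and> v < n2}" by (metis (mono_tags, lifting) mem_Collect_eq)
  qed
  have smult0: "0 \<cdot>\<^sub>v v = 0\<^sub>v (dim_vec v)" for v :: "complex vec" by (intro eq_vecI) auto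
  have det_iff: "det K = 0 \<longleftrightarrow> odd N"
  proof -
    have "det K = 0 \<longleftrightarrow> eigenvalue K 0"
      unfolding det_0_iff_vec_prod_zero_field[OF Kc] eigenvalue_def eigenvector_def
      using Kc smult0 by auto
    moreover have "eigenvalue K 0 \<longleftrightarrow> 0 \<in> {lam u v | u v. u < n1 \<and> v < n2}"
      unfolding part1[symmetric] by simp
    ultimately show ?thesis using zero_char by simp
  qed
  have part5: "invertible_mat K \<longleftrightarrow> even N"
  proof
    assume "invertible_mat K"
    then obtain B where KB: "K * B = 1\<^sub>m N" and BK: "B * K = 1\<^sub>m (dim_row B)"
      unfolding invertible_mat_def inverts_mat_def using Kc by auto
    have "dim_col B = N" using arg_cong[OF KB, of dim_col] by simp
    moreover have "dim_row B = N" using arg_cong[OF BK, of dim_col] Kc by simp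
    ultimately have Bc: "B \<in> carrier_mat N N" by auto
    have "det K * det B = 1" using det_mult[OF Kc Bc] KB by simp
    then have "det K \<noteq> 0" by auto
    then show "even N" using det_iff by simp
  next
    assume "even N"
    then have "det K \<noteq> 0" using det_iff by simp
    from det_non_zero_imp_unit[OF Kc this, of "()"]
    obtain B where "B \<in> carrier_mat N N" "B * K = 1\<^sub>m N" "K * B = 1\<^sub>m N"
      unfolding Units_def ring_mat_def by auto
    then show "invertible_mat K" unfolding invertible_mat_def inverts_mat_def square_mat.simps using Kc by auto
  qed
  define Pm where "Pm = mat N N (\<lambda>(p,r). ?V r p)"
  have Pc: "Pm \<in> carrier_mat N N" unfolding Pm_def by simp
  have indep: "\<forall>r<N. a r = 0" if "\<forall>p<N. (\<Sum>r<N. a r * ?V r p) = 0" for a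
  proof -
    have "\<forall>r\<in>{..<N}. a r = 0"
    proof (rule eig_indep[where A = ?Kf and V = ?V and l = ?L and n = N])
      show "\<forall>r\<in>{..<N}. \<forall>i<N. (\<Sum>j<N. ?Kf i j * ?V r j) = ?L r * ?V r i" using Veig by auto
      show "\<forall>r\<in>{..<N}. \<exists>i<N. ?V r i \<noteq> 0" using VV_0[OF n1 n2] Npos by auto
    qed (use Linj that in auto)
    then show ?thesis by auto
  qed
  have "det Pm \<noteq> 0"
  proof
    assume "det Pm = 0"
    then obtain a where a: "a \<in> carrier_vec N" "a \<noteq> 0\<^sub>v N" "Pm *\<^sub>v a = 0\<^sub>v N"
      unfolding det_0_iff_vec_prod_zero_field[OF Pc] by auto
    have "\<forall>p<N. (\<Sum>r<N. a $ r * ?V r p) = 0"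
    proof (intro allI impI)
      fix p assume p: "p < N"
      have "(Pm *\<^sub>v a) $ p = (\<Sum>r<N. Pm $$ (p,r) * a $ r)" by (rule mv_entry[OF Pc a(1) p])
      also have "\<dots> = (\<Sum>r<N. a $ r * ?V r p)" by (rule sum.cong) (auto simp: Pm_def p)
      finally show "(\<Sum>r<N. a $ r * ?V r p) = 0" using a(3) p by simp
    qed
    then have "\<forall>r<N. a $ r = 0" using indep by blast
    then have "a = 0\<^sub>v N" using a(1) by (intro eq_vecI) auto
    then show False using a(2) by simp
  qed
  from det_non_zero_imp_unit[OF Pc this, of "()"]
  obtain B where Bc: "B \<in> carrier_mat N N" and PB: "Pm * B = 1\<^sub>m N"
    unfolding Units_def ring_mat_def by auto
  have span: "v $ p = (\<Sum>r<N. (B *\<^sub>v v) $ r * ?V r p)" if "v \<in> carrier_vec N" "p < N" for v p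
  proof -
    have "Pm *\<^sub>v (B *\<^sub>v v) = (Pm * B) *\<^sub>v v" using Pc Bc that(1) by (simp add: assoc_mult_mat_vec)
    also have "\<dots> = v" using PB that(1) by simp
    finally have "v $ p = (Pm *\<^sub>v (B *\<^sub>v v)) $ p" by simp
    also have "\<dots> = (\<Sum>r<N. Pm $$ (p,r) * (B *\<^sub>v v) $ r)" by (rule mv_entry[OF Pc _ that(2)]) (use Bc that in auto)
    also have "\<dots> = (\<Sum>r<N. (B *\<^sub>v v) $ r * ?V r p)" by (rule sum.cong) (auto simp: Pm_def that)
    finally show ?thesis .
  qed
  have part4: "vec_space.rank N K = (if even N then N else N - 1)"
  proof (cases "even N")
    case True
    then show ?thesis using vec_space.det_rank_iff[OF Kc] det_iff by simp
  next
    case False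
    define E :: "complex mat" where "E = mat N N (\<lambda>(i,j). (if i = 0 then 1 else 0) * (if j = 0 then 1 else 0))"
    have Ec: "E \<in> carrier_mat N N" unfolding E_def by simp
    have rE: "vec_space.rank N E \<le> 1"
      by (rule vec_space.rank_le_1_product_entries[OF Ec]) (auto simp: E_def)
    have rsub: "vec_space.rank N (K + E) \<le> vec_space.rank N K + vec_space.rank N E"
      by (rule vec_space.rank_subadditive[OF Kc Ec])
    have rle: "vec_space.rank N K \<le> N" by (rule vec_space.rank_le_nc[OF Kc])
    have rne: "vec_space.rank N K \<noteq> N" using vec_space.det_rank_iff[OF Kc] det_iff False by simp
    have KEc: "K + E \<in> carrier_mat N N" using Kc Ec by simp
    obtain r0 where r0: "r0 < N" "?L r0 = 0" using zero_char False Lset by (metis (no_types, lifting) imageE lessThan_iff)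
    have "det (K + E) \<noteq> 0"
    proof
      assume "det (K + E) = 0"
      then obtain v where v: "v \<in> carrier_vec N" "v \<noteq> 0\<^sub>v N" "(K + E) *\<^sub>v v = 0\<^sub>v N"
        unfolding det_0_iff_vec_prod_zero_field[OF KEc] by auto
      define g where "g p = (\<Sum>q<N. ?Kf p q * v $ q)" for p
      have g: "g p + (if p = 0 then v $ 0 else 0) = 0" if p: "p < N" for p
      proof -
        have "((K + E) *\<^sub>v v) $ p = (\<Sum>q<N. (K + E) $$ (p,q) * v $ q)" by (rule mv_entry[OF KEc v(1) p])
        also have "\<dots> = (\<Sum>q<N. ?Kf p q * v $ q + (if p = 0 \<and> q = 0 then v $ q else 0))"
          by (rule sum.cong) (use Kc Ec p in \<open>auto simp: Kent E_def algebra_simps\<close>)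
        also have "\<dots> = g p + (if p = 0 then v $ 0 else 0)"
          unfolding g_def sum.distrib using Npos by (simp add: sum.delta)
        finally show ?thesis using v(3) p by simp
      qed
      have "(\<Sum>p<N. ?P r0 p * g p) = (\<Sum>q<N. (\<Sum>p<N. ?P r0 p * ?Kf p q) * v $ q)"
        unfolding g_def by (rule swap3)
      also have "\<dots> = (\<Sum>q<N. (?L r0 * ?P r0 q) * v $ q)" by (rule sum.cong) (use Peig[OF r0(1)] in auto)
      also have "\<dots> = 0" using r0 by simp
      finally have s0: "(\<Sum>p<N. ?P r0 p * g p) = 0" .
      have "(\<Sum>p<N. ?P r0 p * g p) = (\<Sum>p<N. if p = 0 then - v $ 0 else 0)"
      proof (rule sum.cong)
        fix p assume "p \<in> {..<N}"
        then have gp: "g p + (if p = 0 then v $ 0 else 0) = 0" using g by simp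
        show "?P r0 p * g p = (if p = 0 then - v $ 0 else 0)"
        proof (cases "p = 0")
          case True then show ?thesis using gp PP_0[OF n1 n2] by (simp add: eq_neg_iff_add_eq_0)
        next
          case False then show ?thesis using gp by simp
        qed
      qed simp
      also have "\<dots> = - v $ 0" using Npos by (simp add: sum.delta)
      finally have v0: "v $ 0 = 0" using s0 by simp
      have g0: "g p = 0" if "p < N" for p using g[OF that] v0 by (simp split: if_splits)
      define a where "a r = (B *\<^sub>v v) $ r" for r
      have vs: "v $ p = (\<Sum>r<N. a r * ?V r p)" if "p < N" for p using span[OF v(1) that] unfolding a_def .
      have "(\<Sum>r<N. (a r * ?L r) * ?V r p) = 0" if p: "p < N" for p
      proof -
        have "g p = (\<Sum>q<N. ?Kf p q * (\<Sum>r<N. a r * ?V r q))" unfolding g_def by (rule sum.cong) (auto simp: vs)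
        also have "\<dots> = (\<Sum>r<N. a r * (\<Sum>q<N. ?Kf p q * ?V r q))"
          unfolding sum_distrib_left by (subst sum.swap) (simp add: algebra_simps)
        also have "\<dots> = (\<Sum>r<N. a r * (?L r * ?V r p))" by (rule sum.cong) (use Veig p in auto)
        finally show ?thesis using g0[OF p] by (simp add: algebra_simps)
      qed
      then have "\<forall>r<N. a r * ?L r = 0" using indep[of "\<lambda>r. a r * ?L r"] by simp
      then have ar: "a r = 0" if "r < N" "r \<noteq> r0" for r
        using that r0 Linj by (auto simp: inj_on_def)
      have vp: "v $ p = a r0 * ?V r0 p" if "p < N" for p
      proof -
        have "v $ p = (\<Sum>r<N. if r = r0 then a r0 * ?V r0 p else 0)" unfolding vs[OF that]
          by (rule sum.cong) (auto simp: ar)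
        then show ?thesis using r0 by (simp add: sum.delta)
      qed
      have "a r0 = 0" using vp[OF Npos] v0 VV_0[OF n1 n2] by simp
      then have "v = 0\<^sub>v N" using vp v(1) by (intro eq_vecI) auto
      then show False using v(2) by simp
    qed
    then have "vec_space.rank N (K + E) = N" using vec_space.det_rank_iff[OF KEc] by simp
    then show ?thesis using rE rsub rle rne False by simp
  qed
  have part6: "\<forall>ws c. length ws = N \<and> distinct ws \<and> vectorspace.basis class_ring (module_vec TYPE(complex) N) (set ws)
              \<and> (\<forall>w\<in>set ws. \<exists>\<mu>. eigenvector K w \<mu>)
              \<and> mat_of_cols N ws *\<^sub>v vec N c = unit_vec N 0
            \<longrightarrow> (\<forall>i<N. c i \<noteq> 0)"
  proof (rule allI, rule allI, rule impI)
    fix ws c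
    assume H: "length ws = N \<and> distinct ws \<and> vectorspace.basis class_ring (module_vec TYPE(complex) N) (set ws)
              \<and> (\<forall>w\<in>set ws. \<exists>\<mu>. eigenvector K w \<mu>)
              \<and> mat_of_cols N ws *\<^sub>v vec N c = unit_vec N 0"
    then have len: "length ws = N" and eigw: "\<forall>w\<in>set ws. \<exists>\<mu>. eigenvector K w \<mu>"
      and mc: "mat_of_cols N ws *\<^sub>v vec N c = unit_vec N 0" by auto
    define W where "W j p = ws ! j $ p" for j p
    have ex: "\<exists>r. r < N \<and> eigenvector K (ws ! j) (?L r)" if j: "j < N" for j
    proof -
      obtain mu where mu: "eigenvector K (ws ! j) mu" using eigw nth_mem len j by metis
      then have "eigenvalue K mu" by (auto simp: eigenvalue_def)
      then have "mu \<in> ?L ` {..<N}" using EV by auto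
      then show ?thesis using mu by auto
    qed
    define rho where "rho j = (SOME r. r < N \<and> eigenvector K (ws ! j) (?L r))" for j
    have rho: "rho j < N \<and> eigenvector K (ws ! j) (?L (rho j))" if "j < N" for j
      using someI_ex[OF ex[OF that]] unfolding rho_def .
    have Weig: "\<forall>p<N. (\<Sum>q<N. ?Kf p q * W j q) = ?L (rho j) * W j p" if j: "j < N" for j
    proof (intro allI impI)
      fix p assume p: "p < N"
      have ev: "ws ! j \<in> carrier_vec N" "K *\<^sub>v ws ! j = ?L (rho j) \<cdot>\<^sub>v ws ! j"
        using rho[OF j] Kc unfolding eigenvector_def by auto
      have "(K *\<^sub>v ws ! j) $ p = (\<Sum>q<N. K $$ (p,q) * ws ! j $ q)" by (rule mv_entry[OF Kc ev(1) p])
      also have "\<dots> = (\<Sum>q<N. ?Kf p q * W j q)" by (rule sum.cong) (auto simp: Kent p W_def)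
      finally show "(\<Sum>q<N. ?Kf p q * W j q) = ?L (rho j) * W j p"
        using ev p unfolding W_def by simp
    qed
    have orthW: "(\<Sum>p<N. ?P r p * W j p) = 0" if r: "r < N" and j: "j < N" and ne: "r \<noteq> rho j" for r j
    proof -
      have "(?L r - ?L (rho j)) * (\<Sum>p<N. ?P r p * W j p) = 0"
        by (rule orth[OF Peig[OF r] Weig[OF j]])
      moreover have "?L r \<noteq> ?L (rho j)" using Linj r rho[OF j] ne by (auto simp: inj_on_def)
      ultimately show ?thesis by simp
    qed
    have MC: "mat_of_cols N ws \<in> carrier_mat N N" using mat_of_cols_carrier(1)[of N ws] len by simp
    have mceq: "(\<Sum>j<N. W j p * c j) = (if p = 0 then 1 else 0)" if p: "p < N" for p
    proof -
      have "(mat_of_cols N ws *\<^sub>v vec N c) $ p = (\<Sum>j<N. mat_of_cols N ws $$ (p,j) * vec N c $ j)"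
        by (rule mv_entry[OF MC _ p]) simp
      also have "\<dots> = (\<Sum>j<N. W j p * c j)" by (rule sum.cong) (auto simp: mat_of_cols_index len p W_def)
      finally show ?thesis using mc p by simp
    qed
    have key: "(\<Sum>j<N. (\<Sum>p<N. ?P r p * W j p) * c j) = 1" if r: "r < N" for r
    proof -
      have "(\<Sum>j<N. (\<Sum>p<N. ?P r p * W j p) * c j) = (\<Sum>p<N. ?P r p * (\<Sum>j<N. W j p * c j))"
        by (rule swap3[symmetric])
      also have "\<dots> = (\<Sum>p<N. if p = 0 then ?P r p else 0)" by (rule sum.cong) (auto simp: mceq)
      also have "\<dots> = 1" using Npos PP_0[OF n1 n2] by (simp add: sum.delta)
      finally show ?thesis .
    qed
    have surj: "\<exists>j<N. rho j = r" if r: "r < N" for r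
    proof (rule ccontr)
      assume "\<not> (\<exists>j<N. rho j = r)"
      then have "(\<Sum>j<N. (\<Sum>p<N. ?P r p * W j p) * c j) = 0"
        using orthW[OF r] by (intro sum.neutral) auto
      then show False using key[OF r] by simp
    qed
    have img: "rho ` {..<N} = {..<N}"
    proof
      show "rho ` {..<N} \<subseteq> {..<N}" using rho by auto
      show "{..<N} \<subseteq> rho ` {..<N}" using surj by force
    qed
    have injr: "inj_on rho {..<N}" by (rule eq_card_imp_inj_on) (simp_all add: img)
    show "\<forall>i<N. c i \<noteq> 0"
    proof (intro allI impI)
      fix i assume i: "i < N"
      have "(\<Sum>j<N. (\<Sum>p<N. ?P (rho i) p * W j p) * c j) = (\<Sum>j<N. if j = i then (\<Sum>p<N. ?P (rho i) p * W i p) * c i else 0)"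
      proof (rule sum.cong)
        fix j assume j: "j \<in> {..<N}"
        show "(\<Sum>p<N. ?P (rho i) p * W j p) * c j = (if j = i then (\<Sum>p<N. ?P (rho i) p * W i p) * c i else 0)"
        proof (cases "j = i")
          case False
          then have "rho i \<noteq> rho j" using injr i j by (auto simp: inj_on_def)
          then show ?thesis using orthW[of "rho i" j] rho[OF i] j False by auto
        qed simp
      qed simp
      also have "\<dots> = (\<Sum>p<N. ?P (rho i) p * W i p) * c i" using i by (simp add: sum.delta)
      finally show "c i \<noteq> 0" using key[of "rho i"] rho[OF i] by auto
    qed
  qed
  show ?thesis using part1 part2 part3 part4 part5 part6 by (intro conjI)
qed

end
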